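(* Fix $\delta\in[0,1)$ and $t\ge1$, and consider the logistic bandit interaction with actions chosen by THaTS. Let $A_t^{\mathrm{MU}}\in\arg\max_{a\in\mathcal A(S_t)}\max_{\theta\in\mathcal V_t}\dot\mu(\phi(S_t,a)^\top\theta)\|\phi(S_t,a)\|_{L_t^{-1}}$. Then almost surely $$\min_{\theta\in\mathcal E_t(\delta,\bar\theta_t)}U(S_t,A_t^{\mathrm{MU}},\theta,L_t)\cdot I(S_t,A_t^{\mathrm{MU}},L_t)\le\mathbb E\big[U(S_t,A_t,\bar\theta_t,L_t)\,\big|\,\mathcal F_{t-1},S_t\big],$$ where $I(s,a,L)=\int_{\mathbb S^{d-1}}\big|\big\langle x,\tfrac{L^{-1/2}\phi(s,a)}{\|L^{-1/2}\phi(s,a)\|}\big\rangle\big|\,\sigma(dx)$ with $\sigma$ the uniform probability measure on $\mathbb S^{d-1}$.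
   Context: Logistic setting: $\mu(x)=1/(1+e^{-x})$; context space $\mathcal S$ with distribution $\nu$; finite nonempty action sets $\mathcal A(s)$; features $\phi(s,a)\in\mathbb R^d$ with $\|\phi(s,a)\|\le1$; unknown $\theta_*$ with $\|\theta_*\|\le S$; $\mathbb B_d(S)$ the closed ball of radius $S$. Rounds: $S_t\sim\nu$ independent of the past, $A_t\in\mathcal A(S_t)$, $X_t\in\{0,1\}$ Bernoulli with mean $\mu(\phi(S_t,A_t)^\top\theta_* )$. $\mathcal F_{t-1}=\sigma((S_i,A_i,X_i)_{i<t}$, previous internal randomness$)$. $U(s,a,\theta,L)=\dot\mu(\phi(s,a)^\top\theta)\|\phi(s,a)\|_{L^{-1}}$, $\|x\|_M=\sqrt{x^\top Mx}$. With $\phi_i=\phi(S_i,A_i)$ and $\lambda>0$: $\mathcal L_t^\lambda(\theta)=\lambda\|\theta\|^2-\sum_{i<t}[X_i\log\mu(\phi_i^\top\theta)+(1-X_i)\log(1-\mu(\phi_i^\top\theta))]$; $\bar\theta_t=\arg\min_{\mathbb B_d(S)}\mathcal L_t^\lambda$; $\beta_t(\delta)>0$ a deterministic radius (in the paper $\beta_t=\rho_t+\rho_t^2/\sqrt{\lambda_T}$ with $\lambda_T=1\vee\frac{2d}{S}\log(e\sqrt{1+T/(4d)}\vee1/\delta)$, $\rho_t=(\frac12+S)\sqrt{\lambda_T}+\frac{4d}{\sqrt{\lambda_T}}\log(e\sqrt{1+t/(4d)}\vee1/\delta)$); $\mathcal E_t(\delta,\theta_\circ)=\{\theta\in\mathbb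 B_d(S):\mathcal L_t^\lambda(\theta)-\mathcal L_t^\lambda(\theta_\circ)\le2\beta_t(\delta)^2\}$; $\mathcal V_t=\bigcap_{i=1}^{t-1}\mathcal E_i(\delta,\bar\theta_i)$ (empty intersection $=\mathbb R^d$). $L_1=\lambda I$, $L_{i+1}=L_i+\dot\mu(\phi_i^\top\theta_i')\phi_i\phi_i^\top$ with $\theta_i'=\arg\min_{\theta\in\mathcal E_i(\delta,\bar\theta_i)}\dot\mu(\phi_i^\top\theta)$. THaTS rule at round $t$: given $\mathcal F_{t-1}$ and $S_t$, sample $\tilde\theta_t\sim\mathcal N(0,L_t^{-1})$ and choose $A_t\in\arg\max_{a\in\mathcal A(S_t)}\dot\mu(\phi(S_t,a)^\top\bar\theta_t)|\phi(S_t,a)^\top\tilde\theta_t|$. *)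

theory Defs
  imports "HOL-Analysis.Analysis" "HOL-Probability.Probability"
begin

definition mu :: "real \<Rightarrow> real" where
  "mu x = 1 / (1 + exp (- x))"

definition mudot :: "real \<Rightarrow> real" where
  "mudot x = deriv mu x"

definition wnorm :: "real^'d^'d \<Rightarrow> real^'d \<Rightarrow> real" where
  "wnorm M x = sqrt (x \<bullet> (M *v x))"

definition outer :: "real^'d \<Rightarrow> real^'d^'d" where
  "outer x = (\<chi> j k. x $ j * x $ k)"

definition inv_sqrt :: "real^'d^'d \<Rightarrow> real^'d^'d" where
  "inv_sqrt L = (THE M. transpose M = M \<and> (\<forall>x. x \<noteq> 0 \<longrightarrow> 0 < x \<bullet> (M *v x))
                         \<and> M ** M = matrix_inv L)"

definition U :: "('s \<Rightarrow> 'a \<Rightarrow> real^'d) \<Rightarrow> 's \<Rightarrow> 'a \<Rightarrow> real^'d \<Rightarrow> real^'d^'d \<Rightarrow> real" where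
  "U phi s a \<theta> L = mudot (phi s a \<bullet> \<theta>) * wnorm (matrix_inv L) (phi s a)"

text \<open>fs i = phi(S_i,A_i), xs i = X_i in {0,1}; rounds are indexed from 1,
  and the loss at round t uses the rounds i < t.\<close>
definition loss :: "real \<Rightarrow> (nat \<Rightarrow> real^'d) \<Rightarrow> (nat \<Rightarrow> real) \<Rightarrow> nat \<Rightarrow> real^'d \<Rightarrow> real" where
  "loss lam fs xs t \<theta> = lam * (norm \<theta>)\<^sup>2
     - (\<Sum>i\<in>{1..<t}. xs i * ln (mu (fs i \<bullet> \<theta>)) + (1 - xs i) * ln (1 - mu (fs i \<bullet> \<theta>)))"

definition Econf :: "real \<Rightarrow> real \<Rightarrow> (nat \<Rightarrow> real^'d) \<Rightarrow> (nat \<Rightarrow> real) \<Rightarrow> real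
                     \<Rightarrow> nat \<Rightarrow> real^'d \<Rightarrow> (real^'d) set" where
  "Econf lam S fs xs b t \<theta>0 =
     {\<theta> \<in> cball 0 S. loss lam fs xs t \<theta> - loss lam fs xs t \<theta>0 \<le> 2 * b\<^sup>2}"

text \<open>beta t delta is the radius beta_t(delta); thbar i is the constrained MLE of round i.\<close>
definition Vset :: "real \<Rightarrow> real \<Rightarrow> (nat \<Rightarrow> real^'d) \<Rightarrow> (nat \<Rightarrow> real) \<Rightarrow> (nat \<Rightarrow> real \<Rightarrow> real)
                     \<Rightarrow> real \<Rightarrow> (nat \<Rightarrow> real^'d) \<Rightarrow> nat \<Rightarrow> (real^'d) set" where
  "Vset lam S fs xs beta \<delta> thbar t =
     (\<Inter>i\<in>{1..<t}. Econf lam S fs xs (beta i \<delta>) i (thbar i))"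

definition Lmat :: "real \<Rightarrow> (nat \<Rightarrow> real^'d) \<Rightarrow> (nat \<Rightarrow> real^'d) \<Rightarrow> nat \<Rightarrow> real^'d^'d" where
  "Lmat lam fs thp t = lam *\<^sub>R mat 1 + (\<Sum>i\<in>{1..<t}. mudot (fs i \<bullet> thp i) *\<^sub>R outer (fs i))"

definition gauss_prec :: "real^'d^'d \<Rightarrow> (real^'d) measure" where
  "gauss_prec L = density lborel
     (\<lambda>\<theta>. ennreal (sqrt (det L) / (2 * pi) powr (real CARD('d) / 2)
                     * exp (- (\<theta> \<bullet> (L *v \<theta>)) / 2)))"

text \<open>Uniform probability on S^{d-1}: the normalised cone measure, i.e. the image of the
  uniform distribution on the unit ball under radial projection x / |x|.\<close>
definition sphere_unif :: "(real^'d) measure" where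
  "sphere_unif = distr (uniform_measure lborel (ball 0 1)) borel sgn"

definition Iint :: "('s \<Rightarrow> 'a \<Rightarrow> real^'d) \<Rightarrow> 's \<Rightarrow> 'a \<Rightarrow> real^'d^'d \<Rightarrow> real" where
  "Iint phi s a L = (\<integral>x. \<bar>x \<bullet> sgn (inv_sqrt L *v phi s a)\<bar> \<partial>(sphere_unif :: (real^'d) measure))"

end

theory Submission
  imports Defs
begin


lemma orth_lborel_wo:
  fixes f :: "real^'n::{finite,wellorder} \<Rightarrow> real^'n::_"
  assumes f: "orthogonal_transformation f"
  shows "distr lborel borel f = lborel"
proof -
  have lin: "linear f" using f orthogonal_transformation_linear by blast
  have cf: "continuous_on UNIV f"
    using lin by (simp add: linear_continuous_on linear_linear)
  have fm: "f \<in> borel_measurable borel"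
    using cf by (rule borel_measurable_continuous_onI)
  let ?g = "inv f"
  have g: "orthogonal_transformation ?g" using f orthogonal_transformation_inv by blast
  have bij: "bij f" using f orthogonal_transformation_bij by blast
  show ?thesis
  proof (rule lborel_eqI[symmetric])
    fix l u :: "real^'n::_"
    assume "\<And>b. b \<in> Basis \<Longrightarrow> l \<bullet> b \<le> u \<bullet> b"
    have pre: "f -` box l u = ?g ` box l u"
      using bij by (simp add: bij_vimage_eq_inv_image)
    have ob: "open (f -` box l u)"
      using cf by (metis open_box open_vimage)
    have bb: "box l u \<in> lmeasurable" by simp
    have gm: "?g ` box l u \<in> lmeasurable" using measurable_orthogonal_image[OF g bb] .
    have meq: "measure lebesgue (?g ` box l u) = measure lebesgue (box l u)"
      using measure_orthogonal_image[OF g bb] .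
    have "emeasure (distr lborel borel f) (box l u) = emeasure lborel (f -` box l u)"
      using fm by (simp add: emeasure_distr)
    also have "\<dots> = emeasure lebesgue (?g ` box l u)"
      using ob pre by (simp add: emeasure_completion)
    also have "\<dots> = ennreal (measure lebesgue (?g ` box l u))"
      using gm by (simp add: emeasure_eq_measure2)
    also have "\<dots> = ennreal (measure lebesgue (box l u))" using meq by simp
    also have "\<dots> = emeasure lebesgue (box l u)"
      using bb by (simp add: emeasure_eq_measure2)
    also have "\<dots> = emeasure lborel (box l u)" by simp
    finally show "emeasure (distr lborel borel f) (box l u) = (\<Prod>b\<in>Basis. (u - l) \<bullet> b)"
      using \<open>\<And>b. b \<in> Basis \<Longrightarrow> l \<bullet> b \<le> u \<bullet> b\<close> by (simp add: emeasure_lborel_box_eq)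
  qed simp
qed


typedef 'd wo = "UNIV :: 'd set" by simp

instance wo :: (finite) finite
proof
  have "(UNIV :: 'a wo set) = Abs_wo ` UNIV"
    by (metis Rep_wo_inverse surj_def)
  then show "finite (UNIV :: 'a wo set)" by (metis finite_imageI finite)
qed

instantiation wo :: (finite) linorder
begin
definition less_eq_wo :: "'a wo \<Rightarrow> 'a wo \<Rightarrow> bool" where
  "less_eq_wo x y = (to_nat (Rep_wo x) \<le> to_nat (Rep_wo y))"
definition less_wo :: "'a wo \<Rightarrow> 'a wo \<Rightarrow> bool" where
  "less_wo x y = (to_nat (Rep_wo x) < to_nat (Rep_wo y))"
instance
proof
  fix x y z :: "'a wo"
  show "(x < y) = (x \<le> y \<and> \<not> y \<le> x)" by (auto simp: less_eq_wo_def less_wo_def)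
  show "x \<le> x" by (simp add: less_eq_wo_def)
  show "x \<le> y \<Longrightarrow> y \<le> z \<Longrightarrow> x \<le> z" by (simp add: less_eq_wo_def)
  show "x \<le> y \<Longrightarrow> y \<le> x \<Longrightarrow> x = y"
    by (simp add: less_eq_wo_def Rep_wo_inject[symmetric])
  show "x \<le> y \<or> y \<le> x" by (auto simp: less_eq_wo_def)
qed
end

instance wo :: (finite) wellorder
proof
  fix P :: "'a wo \<Rightarrow> bool" and a
  assume H: "\<And>x. (\<And>y. y < x \<Longrightarrow> P y) \<Longrightarrow> P x"
  show "P a"
    by (induction a rule: measure_induct_rule[of "\<lambda>x. to_nat (Rep_wo x)"])
       (rule H, simp add: less_wo_def)
qed

lemma prod_Basis_cart: "(\<Prod>b\<in>(Basis::(real^'n) set). F b) = (\<Prod>i\<in>UNIV. F (axis i 1))"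
proof -
  have "(Basis::(real^'n) set) = range (\<lambda>i. axis i (1::real))" by (auto simp: Basis_vec_def)
  moreover have "inj (\<lambda>i::'n. axis i (1::real))" by (auto simp: inj_on_def axis_eq_axis)
  ultimately show ?thesis using prod.reindex[of "\<lambda>i::'n. axis i (1::real)" UNIV F] by (simp add: o_def)
qed

lemma sum_Basis_cart: "(\<Sum>b\<in>(Basis::(real^'n) set). F b) = (\<Sum>i\<in>UNIV. F (axis i 1))"
proof -
  have "(Basis::(real^'n) set) = range (\<lambda>i. axis i (1::real))" by (auto simp: Basis_vec_def)
  moreover have "inj (\<lambda>i::'n. axis i (1::real))" by (auto simp: inj_on_def axis_eq_axis)
  ultimately show ?thesis using sum.reindex[of "\<lambda>i::'n. axis i (1::real)" UNIV F] by (simp add: o_def)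
qed

definition Rw :: "real^'d \<Rightarrow> real^('d wo)" where "Rw x = (\<chi> j. x $ Rep_wo j)"
definition Rwi :: "real^('d wo) \<Rightarrow> real^'d" where "Rwi y = (\<chi> i. y $ Abs_wo i)"

lemma Rw_Rwi[simp]: "Rw (Rwi y) = y" by (simp add: Rw_def Rwi_def vec_eq_iff Rep_wo_inverse)
lemma Rwi_Rw[simp]: "Rwi (Rw x) = x" by (simp add: Rw_def Rwi_def vec_eq_iff Abs_wo_inverse)
lemma linear_Rw: "linear Rw" by (auto simp: linear_iff Rw_def vec_eq_iff)
lemma linear_Rwi: "linear Rwi" by (auto simp: linear_iff Rwi_def vec_eq_iff)
lemma Rw_meas[measurable]: "Rw \<in> borel_measurable borel"
  by (intro borel_measurable_continuous_onI linear_continuous_on linear_conv_bounded_linear[THEN iffD1] linear_Rw)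
lemma Rwi_meas[measurable]: "Rwi \<in> borel_measurable borel"
  by (intro borel_measurable_continuous_onI linear_continuous_on linear_conv_bounded_linear[THEN iffD1] linear_Rwi)


lemma distr_Rw: "distr lborel borel (Rw :: real^'d::finite \<Rightarrow> _) = lborel"
proof (rule lborel_eqI[symmetric])
  fix l u :: "real^('d wo)"
  assume le: "\<And>b. b \<in> Basis \<Longrightarrow> l \<bullet> b \<le> u \<bullet> b"
  have eq: "Rw -` box l u = box (Rwi l) (Rwi u)"
  proof (rule set_eqI)
    fix x :: "real^'d"
    have "(\<forall>j. l $ j < x $ Rep_wo j \<and> x $ Rep_wo j < u $ j) \<longleftrightarrow> (\<forall>i. l $ Abs_wo i < x $ i \<and> x $ i < u $ Abs_wo i)"
      by (metis Abs_wo_inverse Rep_wo_inverse UNIV_I)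
    then show "x \<in> Rw -` box l u \<longleftrightarrow> x \<in> box (Rwi l) (Rwi u)"
      by (simp add: mem_box_cart Rw_def Rwi_def)
  qed
  have le': "Rwi l $ i \<le> Rwi u $ i" for i
  proof -
    have "axis (Abs_wo i) 1 \<in> (Basis :: (real^('d wo)) set)" by (auto simp: Basis_vec_def)
    from le[OF this] show ?thesis by (simp add: Rwi_def inner_axis)
  qed
  have P: "(\<Prod>i\<in>UNIV. Rwi u $ i - Rwi l $ i) = (\<Prod>j\<in>UNIV. u $ j - l $ j)"
    unfolding Rwi_def vec_lambda_beta
    by (rule prod.reindex_bij_witness[of _ Rep_wo Abs_wo]) (auto simp: Rep_wo_inverse Abs_wo_inverse)
  have "emeasure (distr lborel borel Rw) (box l u) = emeasure lborel (box (Rwi l) (Rwi u))"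
    by (simp add: emeasure_distr eq)
  also have "\<dots> = (\<Prod>b\<in>Basis. (Rwi u - Rwi l) \<bullet> b)"
    using le' by (subst emeasure_lborel_box_eq) (auto simp: Basis_vec_def inner_axis)
  also have "\<dots> = (\<Prod>i\<in>UNIV. Rwi u $ i - Rwi l $ i)"
    by (simp add: prod_Basis_cart inner_axis)
  also have "\<dots> = (\<Prod>j\<in>UNIV. u $ j - l $ j)" using P by simp
  also have "\<dots> = (\<Prod>b\<in>Basis. (u - l) \<bullet> b)"
    by (simp add: prod_Basis_cart inner_axis)
  finally show "emeasure (distr lborel borel Rw) (box l u) = (\<Prod>b\<in>Basis. (u - l) \<bullet> b)" .
qed simp

lemma distr_Rwi: "distr lborel borel (Rwi :: real^('d::finite wo) \<Rightarrow> _) = lborel"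
proof -
  have "distr lborel borel (Rwi :: real^('d::finite wo) \<Rightarrow> _) = distr (distr lborel borel Rw) borel Rwi"
    by (simp add: distr_Rw)
  also have "\<dots> = distr lborel borel (Rwi \<circ> Rw)"
    by (subst distr_distr) auto
  also have "\<dots> = distr lborel lborel (\<lambda>x. x)" by (rule distr_cong) auto
  also have "\<dots> = lborel" by (rule distr_id)
  finally show ?thesis .
qed

lemma orth_lborel:
  fixes f :: "real^'d::finite \<Rightarrow> real^'d"
  assumes f: "orthogonal_transformation f"
  shows "distr lborel borel f = lborel"
proof -
  define f' where "f' = Rw \<circ> f \<circ> Rwi"
  have lin: "linear f" using f orthogonal_transformation_linear by blast
  have fm[measurable]: "f \<in> borel_measurable borel"
    by (intro borel_measurable_continuous_onI linear_continuous_on linear_conv_bounded_linear[THEN iffD1] lin)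
  have nR: "norm (Rw x) = norm x" for x :: "real^'d"
  proof -
    have "(\<Sum>j\<in>UNIV. (x $ Rep_wo j)\<^sup>2) = (\<Sum>i\<in>UNIV. (x $ i)\<^sup>2)"
      by (rule sum.reindex_bij_witness[of _ Abs_wo Rep_wo]) (auto simp: Rep_wo_inverse Abs_wo_inverse)
    then show ?thesis by (simp add: norm_vec_def L2_set_def Rw_def)
  qed
  have "orthogonal_transformation f'"
    unfolding orthogonal_transformation f'_def
    using lin linear_Rw linear_Rwi
    by (auto intro!: linear_compose simp: nR orthogonal_transformation_norm[OF f] simp flip: nR[of "Rwi _"])
  then have D: "distr lborel borel f' = lborel" by (rule orth_lborel_wo)
  have "f = Rwi \<circ> f' \<circ> Rw" by (simp add: f'_def fun_eq_iff)
  then have "distr lborel borel f = distr (distr (distr lborel borel Rw) borel f') borel Rwi"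
    by (simp add: distr_distr o_assoc f'_def)
  also have "\<dots> = lborel" by (simp add: distr_Rw D distr_Rwi)
  finally show ?thesis .
qed


lemma max_eig:
  fixes A :: "'a::euclidean_space \<Rightarrow> 'a"
  assumes lin: "linear A" and sym: "\<And>x y. A x \<bullet> y = x \<bullet> A y"
    and V: "subspace V" "A ` V \<subseteq> V" and x0: "x0 \<in> V" "norm x0 = 1"
    and mx: "\<And>z. z \<in> V \<Longrightarrow> norm z = 1 \<Longrightarrow> z \<bullet> A z \<le> x0 \<bullet> A x0"
  shows "A x0 = (x0 \<bullet> A x0) *\<^sub>R x0"
proof -
  define l where "l = x0 \<bullet> A x0"
  define y where "y = A x0 - l *\<^sub>R x0"
  have x0x0: "x0 \<bullet> x0 = 1" using x0(2) by (simp add: norm_eq_1)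
  have yV: "y \<in> V" unfolding y_def using V x0 by (auto intro!: subspace_diff subspace_scale)
  have x0y: "x0 \<bullet> y = 0" by (simp add: y_def inner_diff_right l_def x0x0)
  have Ay: "x0 \<bullet> A y = y \<bullet> y"
  proof -
    have "x0 \<bullet> A y = A x0 \<bullet> y" by (simp add: sym)
    also have "A x0 = y + l *\<^sub>R x0" by (simp add: y_def)
    finally show ?thesis using x0y by (simp add: inner_add_right inner_commute)
  qed
  have key: "2 * (y \<bullet> y) \<le> e * (l * (y \<bullet> y) - y \<bullet> A y)" if e: "e > 0" for e
  proof -
    define z where "z = x0 + e *\<^sub>R y"
    have zV: "z \<in> V" unfolding z_def using V x0 yV by (auto intro!: subspace_add subspace_scale)
    have zz: "z \<bullet> z = 1 + e^2 * (y \<bullet> y)"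
      by (simp add: z_def inner_add_left inner_add_right x0x0 x0y inner_commute power2_eq_square)
    have zpos: "z \<bullet> z > 0" using zz by (smt (verit) inner_ge_zero mult_nonneg_nonneg zero_le_power2)
    have nz: "norm z > 0" using zpos by (simp add: inner_gt_zero_iff)
    define z' where "z' = z /\<^sub>R norm z"
    have z'V: "z' \<in> V" unfolding z'_def using V zV by (auto intro!: subspace_scale)
    have nz': "norm z' = 1" unfolding z'_def using nz by simp
    have "z' \<bullet> A z' = (z \<bullet> A z) / (norm z)^2"
      unfolding z'_def using lin by (simp add: linear_scale power2_eq_square divide_simps)
    with mx[OF z'V nz'] have "(z \<bullet> A z) / (norm z)^2 \<le> l" by (simp add: l_def)
    then have "z \<bullet> A z \<le> l * (z \<bullet> z)" using nz by (simp add: divide_le_eq power2_norm_eq_inner mult.commute)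
    moreover have "z \<bullet> A z = l + 2 * e * (y \<bullet> y) + e^2 * (y \<bullet> A y)"
    proof -
      have "A z = A x0 + e *\<^sub>R A y" unfolding z_def using lin by (simp add: linear_add linear_scale)
      then have "z \<bullet> A z = x0 \<bullet> A x0 + e * (x0 \<bullet> A y) + e * (y \<bullet> A x0) + e^2 * (y \<bullet> A y)"
        by (simp add: z_def inner_add_left inner_add_right power2_eq_square algebra_simps)
      moreover have "y \<bullet> A x0 = y \<bullet> y" using Ay sym by (metis inner_commute)
      ultimately show ?thesis using Ay by (simp add: l_def)
    qed
    ultimately have "l + 2 * e * (y \<bullet> y) + e^2 * (y \<bullet> A y) \<le> l * (1 + e^2 * (y \<bullet> y))"
      using zz by simp
    then have "e * (2 * (y \<bullet> y)) \<le> e * (e * (l * (y \<bullet> y) - y \<bullet> A y))"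
      by (simp add: algebra_simps power2_eq_square)
    then show ?thesis using e by simp
  qed
  have "y \<bullet> y = 0"
  proof (rule ccontr)
    assume "y \<bullet> y \<noteq> 0"
    then have yp: "y \<bullet> y > 0" by (simp add: order_le_neq_trans)
    define C where "C = l * (y \<bullet> y) - y \<bullet> A y"
    show False
    proof (cases "C \<le> 0")
      case True
      with key[of 1] yp show False unfolding C_def by simp
    next
      case False
      with key[of "(y \<bullet> y) / C"] yp have "2 * (y \<bullet> y) \<le> (y \<bullet> y) / C * C" by (simp add: C_def)
      with False yp show False by simp
    qed
  qed
  then have "y = 0" by simp
  then show ?thesis by (simp add: y_def l_def)
qed

lemma spec_sub:
  fixes A :: "'a::euclidean_space \<Rightarrow> 'a"
  assumes lin: "linear A" and sym: "\<And>x y. A x \<bullet> y = x \<bullet> A y"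
  shows "subspace V \<Longrightarrow> A ` V \<subseteq> V \<Longrightarrow> \<exists>B. B \<subseteq> V \<and> pairwise orthogonal B \<and>
           (\<forall>b\<in>B. norm b = 1 \<and> A b = (b \<bullet> A b) *\<^sub>R b) \<and> V \<subseteq> span B"
proof (induction "dim V" arbitrary: V rule: less_induct)
  case less
  show ?case
  proof (cases "V \<subseteq> {0}")
    case True
    then show ?thesis by (intro exI[of _ "{}"]) auto
  next
    case False
    then obtain v where v: "v \<in> V" "v \<noteq> 0" by auto
    let ?S = "V \<inter> sphere 0 1"
    have "v /\<^sub>R norm v \<in> ?S" using v less.prems by (auto intro!: subspace_scale)
    then have Sne: "?S \<noteq> {}" by blast
    have Sc: "compact ?S" using closed_subspace[OF less.prems(1)] by (intro closed_Int_compact) auto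
    have cont: "continuous_on ?S (\<lambda>x. x \<bullet> A x)"
      using lin by (intro continuous_intros linear_continuous_on linear_conv_bounded_linear[THEN iffD1])
    obtain x0 where x0: "x0 \<in> ?S" and mx: "\<And>z. z \<in> ?S \<Longrightarrow> z \<bullet> A z \<le> x0 \<bullet> A x0"
      using continuous_attains_sup[OF Sc Sne cont] by blast
    have eig: "A x0 = (x0 \<bullet> A x0) *\<^sub>R x0"
      using x0 mx by (intro max_eig[OF lin sym less.prems]) auto
    define W where "W = {x \<in> V. x \<bullet> x0 = 0}"
    have Wsub: "subspace W" using less.prems(1)
      unfolding W_def subspace_def by (auto simp: inner_add_left)
    have WA: "A ` W \<subseteq> W"
    proof
      fix z assume "z \<in> A ` W"
      then obtain x where x: "x \<in> W" "z = A x" by auto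
      have "A x \<bullet> x0 = x \<bullet> A x0" by (rule sym)
      also have "\<dots> = 0" using x(1) eig by (metis (mono_tags, lifting) W_def inner_scaleR_right mem_Collect_eq mult_zero_right)
      finally show "z \<in> W" using x less.prems(2) by (auto simp: W_def)
    qed
    have x0W: "x0 \<notin> W" using x0 by (simp add: W_def norm_eq_1)
    have WV: "W \<subset> V" using x0 x0W unfolding W_def by blast
    have "dim W < dim V"
      using WV Wsub less.prems(1) dim_psubset[of W V] by (simp add: span_eq_iff[THEN iffD2])
    from less.hyps[OF this Wsub WA] obtain B where B: "B \<subseteq> W" "pairwise orthogonal B"
      "\<forall>b\<in>B. norm b = 1 \<and> A b = (b \<bullet> A b) *\<^sub>R b" "W \<subseteq> span B" by blast
    show ?thesis
    proof (intro exI[of _ "insert x0 B"] conjI)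
      show "insert x0 B \<subseteq> V" using B(1) x0 W_def by auto
      show "pairwise orthogonal (insert x0 B)"
        using B(1,2) x0W unfolding pairwise_insert
        by (auto simp: W_def orthogonal_def inner_commute)
      show "\<forall>b\<in>insert x0 B. norm b = 1 \<and> A b = (b \<bullet> A b) *\<^sub>R b" using B(3) x0 eig by auto
      show "V \<subseteq> span (insert x0 B)"
      proof
        fix z assume z: "z \<in> V"
        have "z - (z \<bullet> x0) *\<^sub>R x0 \<in> W"
          using z x0 less.prems(1) by (auto simp: W_def inner_diff_left norm_eq_1 intro!: subspace_diff subspace_scale)
        then have "z - (z \<bullet> x0) *\<^sub>R x0 \<in> span (insert x0 B)"
          using B(4) span_mono[of B "insert x0 B"] by auto
        moreover have "(z \<bullet> x0) *\<^sub>R x0 \<in> span (insert x0 B)" by (simp add: span_base span_scale)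
        ultimately have "(z - (z \<bullet> x0) *\<^sub>R x0) + (z \<bullet> x0) *\<^sub>R x0 \<in> span (insert x0 B)"
          by (rule span_add)
        then show "z \<in> span (insert x0 B)" by simp
      qed
    qed
  qed
qed

lemma spectral:
  fixes A :: "real^'n \<Rightarrow> real^'n"
  assumes lin: "linear A" and sym: "\<And>x y. A x \<bullet> y = x \<bullet> A y"
  obtains e :: "'n \<Rightarrow> real^'n" where "\<And>i j. e i \<bullet> e j = (if i = j then 1 else 0)"
    "\<And>i. A (e i) = (e i \<bullet> A (e i)) *\<^sub>R e i"
    "\<And>x. x = (\<Sum>i\<in>UNIV. (x \<bullet> e i) *\<^sub>R e i)"
proof -
  obtain B where B: "pairwise orthogonal B" "\<forall>b\<in>B. norm b = 1 \<and> A b = (b \<bullet> A b) *\<^sub>R b"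
    "UNIV \<subseteq> span B"
    using spec_sub[OF lin sym, of UNIV] by auto
  have fin: "finite B" using B(1) by (rule pairwise_orthogonal_imp_finite)
  have "0 \<notin> B" using B(2) by auto
  then have ind: "independent B" using B(1) pairwise_orthogonal_independent by blast
  have "card B = dim B" using ind by (simp add: dim_eq_card_independent)
  also have "\<dots> = dim (span B)" by simp
  also have "span B = UNIV" using B(3) by auto
  also have "dim (UNIV :: (real^'n) set) = CARD('n)" by simp
  finally have cB: "card B = CARD('n)" .
  obtain e where e: "bij_betw e (UNIV :: 'n set) B"
    using finite_same_card_bij[of "UNIV :: 'n set" B] fin cB by auto
  have eB: "e i \<in> B" for i using e by (auto simp: bij_betw_def)
  have orth: "e i \<bullet> e j = (if i = j then 1 else 0)" for i j
  proof (cases "i = j")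
    case True then show ?thesis using B(2) eB[of i] by (simp add: norm_eq_1)
  next
    case False
    then have "e i \<noteq> e j" using e by (auto simp: bij_betw_def inj_on_def)
    then show ?thesis using B(1) eB[of i] eB[of j] False by (auto simp: pairwise_def orthogonal_def)
  qed
  have eig: "A (e i) = (e i \<bullet> A (e i)) *\<^sub>R e i" for i using B(2) eB by auto
  have rng: "range e = B" using e by (simp add: bij_betw_def)
  have exp: "x = (\<Sum>i\<in>UNIV. (x \<bullet> e i) *\<^sub>R e i)" for x
  proof -
    define r where "r = x - (\<Sum>i\<in>UNIV. (x \<bullet> e i) *\<^sub>R e i)"
    have ro: "r \<bullet> e j = 0" for j
    proof -
      have "(\<Sum>i\<in>UNIV. (x \<bullet> e i) *\<^sub>R e i) \<bullet> e j = (\<Sum>i\<in>UNIV. (x \<bullet> e i) * (e i \<bullet> e j))"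
        by (simp add: inner_sum_left)
      also have "\<dots> = x \<bullet> e j" by (simp add: orth if_distrib cong: if_cong)
      finally show ?thesis by (simp add: r_def inner_diff_left)
    qed
    have "r \<bullet> z = 0" if "z \<in> span B" for z
      using that
    proof (induction rule: span_induct)
      show "subspace {z. r \<bullet> z = 0}" by (auto simp: subspace_def inner_add_right)
      show "\<And>z. z \<in> B \<Longrightarrow> r \<bullet> z = 0" using ro rng by auto
    qed
    then have "r \<bullet> r = 0" using B(3) by blast
    then show ?thesis by (simp add: r_def)
  qed
  show ?thesis using that orth eig exp by blast
qed


lemma gauss1: "(\<integral>\<^sup>+ x. ennreal (exp (- x\<^sup>2 / 2)) \<partial>lborel) = ennreal (sqrt (2 * pi))"
proof -
  have "(\<integral>\<^sup>+ x. ennreal (std_normal_density x) \<partial>lborel) = ennreal 1"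
    by (subst nn_integral_eq_integral) auto
  then have "ennreal (sqrt (2 * pi)) * (\<integral>\<^sup>+ x. ennreal (std_normal_density x) \<partial>lborel) = ennreal (sqrt (2 * pi))"
    by simp
  also have "ennreal (sqrt (2 * pi)) * (\<integral>\<^sup>+ x. ennreal (std_normal_density x) \<partial>lborel)
      = (\<integral>\<^sup>+ x. ennreal (sqrt (2 * pi)) * ennreal (std_normal_density x) \<partial>lborel)"
    by (rule nn_integral_cmult[symmetric]) simp
  also have "\<dots> = (\<integral>\<^sup>+ x. ennreal (exp (- x\<^sup>2 / 2)) \<partial>lborel)"
    by (intro nn_integral_cong) (simp add: std_normal_density_def ennreal_mult'[symmetric])
  finally show ?thesis .
qed

lemma gaussd: "(\<integral>\<^sup>+ z. ennreal (exp (- (norm (z::real^'d))\<^sup>2 / 2)) \<partial>lborel)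
   = ennreal ((2 * pi) powr (real CARD('d) / 2))"
proof -
  have eq: "ennreal (exp (- (norm z)\<^sup>2 / 2)) = (\<Prod>b\<in>Basis. ennreal (exp (- (z \<bullet> b)\<^sup>2 / 2)))" for z :: "real^'d"
  proof -
    have "(norm z)\<^sup>2 = (\<Sum>b\<in>Basis. (z \<bullet> b)\<^sup>2)"
      unfolding power2_norm_eq_inner by (subst euclidean_inner) (simp add: power2_eq_square)
    then have "exp (- (norm z)\<^sup>2 / 2) = (\<Prod>b\<in>Basis. exp (- (z \<bullet> b)\<^sup>2 / 2))"
      by (simp add: exp_sum[symmetric] sum_divide_distrib sum_negf)
    then show ?thesis by (simp add: prod_ennreal)
  qed
  have "(\<integral>\<^sup>+ z. ennreal (exp (- (norm (z::real^'d))\<^sup>2 / 2)) \<partial>lborel)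
     = (\<integral>\<^sup>+ z. (\<Prod>b\<in>(Basis::(real^'d) set). ennreal (exp (- (z \<bullet> b)\<^sup>2 / 2))) \<partial>lborel)"
    by (intro nn_integral_cong) (rule eq)
  also have "\<dots> = (\<Prod>b\<in>(Basis::(real^'d) set). (\<integral>\<^sup>+ x. ennreal (exp (- x\<^sup>2 / 2)) \<partial>lborel))"
    using nn_integral_lborel_prod[where f="\<lambda>b x. exp (- x\<^sup>2 / 2)" and 'a="real^'d"] by (simp add: prod_ennreal)
  also have "\<dots> = ennreal (sqrt (2 * pi) ^ CARD('d))"
    using gauss1 by (simp add: ennreal_power)
  also have "sqrt (2 * pi) ^ CARD('d) = (2 * pi) powr (real CARD('d) / 2)"
  proof -
    have "(2 * pi) powr (real CARD('d) / 2) = ((2 * pi) powr (1/2)) powr (real CARD('d))"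
      by (simp add: powr_powr)
    also have "(2 * pi) powr (1/2) = sqrt (2 * pi)" by (simp add: powr_half_sqrt)
    also have "sqrt (2 * pi) powr (real CARD('d)) = sqrt (2 * pi) ^ CARD('d)"
      by (rule powr_realpow) simp
    finally show ?thesis by simp
  qed
  finally show ?thesis .
qed


lemma ball_scale:
  fixes g :: "real^'d \<Rightarrow> ennreal"
  assumes g[measurable]: "g \<in> borel_measurable borel"
    and hom: "\<And>r x. r > 0 \<Longrightarrow> g (r *\<^sub>R x) = g x" and r: "r > 0"
  shows "(\<integral>\<^sup>+ z. g z * indicator (ball 0 r) z \<partial>lborel)
       = ennreal (r ^ CARD('d)) * (\<integral>\<^sup>+ z. g z * indicator (ball 0 1) z \<partial>lborel)"
proof -
  let ?F = "\<lambda>z. g z * indicator (ball (0::real^'d) r) z"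
  have [measurable]: "ball (0::real^'d) r \<in> sets borel" "ball (0::real^'d) 1 \<in> sets borel" by auto
  have L: "(lborel :: (real^'d) measure) = density (distr lborel borel (\<lambda>x. 0 + r *\<^sub>R x)) (\<lambda>_. \<bar>r\<bar> ^ DIM(real^'d))"
    using lborel_affine[of r "0::real^'d"] r by simp
  have "(\<integral>\<^sup>+ z. ?F z \<partial>lborel) = (\<integral>\<^sup>+ z. ?F z \<partial>density (distr lborel borel (\<lambda>x. 0 + r *\<^sub>R x)) (\<lambda>_. \<bar>r\<bar> ^ DIM(real^'d)))"
    using arg_cong[OF L, of "\<lambda>M. \<integral>\<^sup>+ z. ?F z \<partial>M"] .
  also have "\<dots> = (\<integral>\<^sup>+ z. ennreal (\<bar>r\<bar> ^ DIM(real^'d)) * ?F z \<partial>distr lborel borel (\<lambda>x. 0 + r *\<^sub>R x))"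
    by (subst nn_integral_density) auto
  also have "\<dots> = (\<integral>\<^sup>+ z. ennreal (\<bar>r\<bar> ^ DIM(real^'d)) * ?F (0 + r *\<^sub>R z) \<partial>lborel)"
    by (subst nn_integral_distr) auto
  also have "\<dots> = (\<integral>\<^sup>+ z. ennreal (r ^ CARD('d)) * (g z * indicator (ball 0 1) z) \<partial>lborel)"
  proof (intro nn_integral_cong)
    fix z :: "real^'d"
    have "indicator (ball (0::real^'d) r) (r *\<^sub>R z) = (indicator (ball 0 1) z :: ennreal)"
      using r by (simp add: indicator_def)
    then show "ennreal (\<bar>r\<bar> ^ DIM(real^'d)) * ?F (0 + r *\<^sub>R z) = ennreal (r ^ CARD('d)) * (g z * indicator (ball 0 1) z)"
      using r hom[OF r] by simp
  qed
  also have "\<dots> = ennreal (r ^ CARD('d)) * (\<integral>\<^sup>+ z. g z * indicator (ball 0 1) z \<partial>lborel)"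
    by (rule nn_integral_cmult) simp
  finally show ?thesis .
qed

lemma layer:
  fixes g :: "real^'d \<Rightarrow> ennreal"
  assumes g[measurable]: "g \<in> borel_measurable borel"
    and hom: "\<And>r x. r > 0 \<Longrightarrow> g (r *\<^sub>R x) = g x"
  shows "(\<integral>\<^sup>+ z. g z * ennreal (exp (- (norm z)\<^sup>2 / 2)) \<partial>lborel)
       = (\<integral>\<^sup>+ s. indicator {0<..<1} s * ennreal (sqrt (- 2 * ln s) ^ CARD('d)) \<partial>lborel)
         * (\<integral>\<^sup>+ z. g z * indicator (ball 0 1) z \<partial>lborel)"
proof -
  define J where "J = (\<integral>\<^sup>+ z. g z * indicator (ball (0::real^'d) 1) z \<partial>lborel)"
  define H where "H = (\<lambda>p::(real^'d) \<times> real. g (fst p) * (if 0 < snd p \<and> snd p < exp (- (norm (fst p))\<^sup>2 / 2) then 1 else 0))"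
  have Hm[measurable]: "H \<in> borel_measurable (lborel \<Otimes>\<^sub>M lborel)"
    unfolding H_def by measurable
  have P: "pair_sigma_finite (lborel :: (real^'d) measure) (lborel :: real measure)"
    by (simp add: pair_sigma_finite_def lborel.sigma_finite_measure_axioms)
  have E: "ennreal (exp (- (norm z)\<^sup>2 / 2)) = (\<integral>\<^sup>+ s. (if 0 < s \<and> s < exp (- (norm z)\<^sup>2 / 2) then 1 else 0) \<partial>lborel)"
    for z :: "real^'d"
  proof -
    have "(\<integral>\<^sup>+ s. (if 0 < s \<and> s < exp (- (norm z)\<^sup>2 / 2) then 1 else 0) \<partial>lborel)
        = (\<integral>\<^sup>+ s. indicator {0<..<exp (- (norm z)\<^sup>2 / 2)} s \<partial>lborel)"
      by (intro nn_integral_cong) (simp add: indicator_def)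
    also have "\<dots> = emeasure lborel {0<..<exp (- (norm z)\<^sup>2 / 2)}" by simp
    also have "\<dots> = ennreal (exp (- (norm z)\<^sup>2 / 2))" by simp
    finally show ?thesis by simp
  qed
  have "(\<integral>\<^sup>+ z. g z * ennreal (exp (- (norm z)\<^sup>2 / 2)) \<partial>lborel)
      = (\<integral>\<^sup>+ z. (\<integral>\<^sup>+ s. H (z, s) \<partial>lborel) \<partial>lborel)"
  proof (intro nn_integral_cong)
    fix z :: "real^'d"
    have "g z * ennreal (exp (- (norm z)\<^sup>2 / 2)) = g z * (\<integral>\<^sup>+ s. (if 0 < s \<and> s < exp (- (norm z)\<^sup>2 / 2) then 1 else 0) \<partial>lborel)"
      using E[of z] by simp
    also have "\<dots> = (\<integral>\<^sup>+ s. H (z, s) \<partial>lborel)"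
      unfolding H_def by (subst nn_integral_cmult[symmetric]) auto
    finally show "g z * ennreal (exp (- (norm z)\<^sup>2 / 2)) = (\<integral>\<^sup>+ s. H (z, s) \<partial>lborel)" .
  qed
  also have "\<dots> = (\<integral>\<^sup>+ s. (\<integral>\<^sup>+ z. H (z, s) \<partial>lborel) \<partial>lborel)"
    by (rule pair_sigma_finite.Fubini[OF P Hm, symmetric])
  also have "\<dots> = (\<integral>\<^sup>+ s. indicator {0<..<1} s * ennreal (sqrt (- 2 * ln s) ^ CARD('d)) * J \<partial>lborel)"
  proof (intro nn_integral_cong)
    fix s :: real
    show "(\<integral>\<^sup>+ z. H (z, s) \<partial>lborel) = indicator {0<..<1} s * ennreal (sqrt (- 2 * ln s) ^ CARD('d)) * J"
    proof (cases "0 < s \<and> s < 1")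
      case True
      define R where "R = sqrt (- 2 * ln s)"
      have lns: "ln s < 0" using True by simp
      have Rp: "R > 0" unfolding R_def using lns by simp
      have iff: "(s < exp (- (norm z)\<^sup>2 / 2)) \<longleftrightarrow> norm z < R" for z :: "real^'d"
      proof -
        have "s < exp (- (norm z)\<^sup>2 / 2) \<longleftrightarrow> ln s < - (norm z)\<^sup>2 / 2"
          using True by (metis exp_less_cancel_iff exp_ln)
        also have "\<dots> \<longleftrightarrow> (norm z)\<^sup>2 < - 2 * ln s" by auto
        also have "\<dots> \<longleftrightarrow> norm z < R" unfolding R_def
          by (metis norm_ge_zero real_less_rsqrt real_sqrt_less_iff real_sqrt_pow2_iff real_sqrt_power)
        finally show ?thesis .
      qed
      have "(\<integral>\<^sup>+ z. H (z, s) \<partial>lborel) = (\<integral>\<^sup>+ z. g z * indicator (ball 0 R) z \<partial>lborel)"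
      proof (intro nn_integral_cong)
        fix z :: "real^'d"
        show "H (z, s) = g z * indicator (ball 0 R) z"
          using iff[of z] True unfolding H_def by (simp add: indicator_def)
      qed
      also have "\<dots> = ennreal (R ^ CARD('d)) * J"
        unfolding J_def by (rule ball_scale[OF g hom Rp])
      finally show ?thesis using True by (simp add: R_def)
    next
      case False
      have "H (z, s) = 0" for z :: "real^'d"
      proof -
        have "exp (- (norm z)\<^sup>2 / 2) \<le> 1" by simp
        then have "\<not> (0 < s \<and> s < exp (- (norm z)\<^sup>2 / 2))" using False by linarith
        then show ?thesis unfolding H_def fst_conv snd_conv by (simp only: if_False mult_zero_right)
      qed
      then show ?thesis using False by (simp add: indicator_def)
    qed
  qed
  also have "\<dots> = (\<integral>\<^sup>+ s. indicator {0<..<1} s * ennreal (sqrt (- 2 * ln s) ^ CARD('d)) \<partial>lborel) * J"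
    by (rule nn_integral_multc) simp
  finally show ?thesis unfolding J_def .
qed


definition Jz :: "real^'d \<Rightarrow> ennreal" where
  "Jz u = (\<integral>\<^sup>+ z. ennreal \<bar>u \<bullet> sgn z\<bar> * indicator (ball 0 1) z \<partial>lborel)"

definition Kball :: "real^'d \<Rightarrow> real" where
  "Kball u = enn2real (Jz u) / measure lborel (ball (0::real^'d) 1)"

lemma Jz_finite: "Jz (u::real^'d) \<le> ennreal (norm u) * emeasure lborel (ball (0::real^'d) 1)"
proof -
  have "Jz u \<le> (\<integral>\<^sup>+ z. ennreal (norm u) * indicator (ball (0::real^'d) 1) z \<partial>lborel)"
    unfolding Jz_def
  proof (intro nn_integral_mono)
    fix z :: "real^'d"
    have "\<bar>u \<bullet> sgn z\<bar> \<le> norm u * norm (sgn z)" by (rule Cauchy_Schwarz_ineq2)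
    also have "\<dots> \<le> norm u" by (simp add: norm_sgn)
    finally show "ennreal \<bar>u \<bullet> sgn z\<bar> * indicator (ball 0 1) z \<le> ennreal (norm u) * indicator (ball 0 1) z"
      by (auto simp: indicator_def intro: ennreal_leI)
  qed
  also have "\<dots> = ennreal (norm u) * emeasure lborel (ball (0::real^'d) 1)"
    by (subst nn_integral_cmult_indicator) auto
  finally show ?thesis .
qed

lemma vol_ball: "emeasure lborel (ball (0::real^'d) 1) = ennreal (measure lborel (ball (0::real^'d) 1))"
  "measure lborel (ball (0::real^'d) 1) > 0"
  using emeasure_lborel_ball_finite[of "0::real^'d" 1] content_ball_pos[of 1 "0::real^'d"]
  by (auto simp: emeasure_eq_ennreal_measure less_top)

lemma Jz_real: "Jz (u::real^'d) = ennreal (enn2real (Jz u))"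
proof -
  have "Jz u \<le> ennreal (norm u * measure lborel (ball (0::real^'d) 1))"
    using Jz_finite[of u] vol_ball(1)[where 'd='d] by (simp add: ennreal_mult)
  also have "\<dots> < \<infinity>" by simp
  finally have "Jz u < \<infinity>" .
  then show ?thesis by simp
qed

lemma sphere_int: "(\<integral>x. \<bar>x \<bullet> u\<bar> \<partial>(sphere_unif :: (real^'d) measure)) = Kball u"
proof -
  let ?B = "ball (0::real^'d) 1"
  have [measurable]: "?B \<in> sets borel" by simp
  have "(\<integral>x. \<bar>x \<bullet> u\<bar> \<partial>(sphere_unif :: (real^'d) measure))
      = (\<integral>z. \<bar>sgn z \<bullet> u\<bar> \<partial>uniform_measure lborel ?B)"
    unfolding sphere_unif_def by (subst integral_distr) auto
  also have "\<dots> = enn2real (\<integral>\<^sup>+ z. ennreal \<bar>sgn z \<bullet> u\<bar> \<partial>uniform_measure lborel ?B)"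
    by (subst integral_eq_nn_integral) auto
  also have "(\<integral>\<^sup>+ z. ennreal \<bar>sgn z \<bullet> u\<bar> \<partial>uniform_measure lborel ?B) = Jz u / emeasure lborel ?B"
    unfolding Jz_def by (subst nn_integral_uniform_measure) (auto simp: inner_commute)
  also have "\<dots> = ennreal (enn2real (Jz u) / measure lborel ?B)"
    using vol_ball[where 'd='d] Jz_real[of u]
    by (metis divide_ennreal enn2real_nonneg)
  finally show ?thesis unfolding Kball_def
    using vol_ball(2)[where 'd='d] by simp
qed

lemma Jz_rot:
  fixes u v :: "real^'d"
  assumes "norm u = 1" "norm v = 1"
  shows "Jz u = Jz v"
proof -
  obtain f where f: "orthogonal_transformation f" "f v = u"
    using orthogonal_transformation_exists_1[OF assms(2) assms(1)] by blast
  have lin: "linear f" using f(1) orthogonal_transformation_linear by blast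
  have fm[measurable]: "f \<in> borel_measurable borel"
    by (intro borel_measurable_continuous_onI linear_continuous_on linear_conv_bounded_linear[THEN iffD1] lin)
  have [measurable]: "ball (0::real^'d) 1 \<in> sets borel" by simp
  have "Jz u = (\<integral>\<^sup>+ z. ennreal \<bar>u \<bullet> sgn z\<bar> * indicator (ball 0 1) z \<partial>distr lborel borel f)"
    unfolding Jz_def using orth_lborel[OF f(1)] by simp
  also have "\<dots> = (\<integral>\<^sup>+ y. ennreal \<bar>u \<bullet> sgn (f y)\<bar> * indicator (ball 0 1) (f y) \<partial>lborel)"
    by (subst nn_integral_distr) auto
  also have "\<dots> = Jz v"
    unfolding Jz_def
  proof (intro nn_integral_cong)
    fix y :: "real^'d"
    have n: "norm (f y) = norm y" using f(1) orthogonal_transformation_norm by blast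
    have "sgn (f y) = f (sgn y)" unfolding sgn_div_norm n using lin by (simp add: linear_scale)
    then have "u \<bullet> sgn (f y) = v \<bullet> sgn y" using f by (metis orthogonal_transformation_def)
    then show "ennreal \<bar>u \<bullet> sgn (f y)\<bar> * indicator (ball 0 1) (f y) = ennreal \<bar>v \<bullet> sgn y\<bar> * indicator (ball 0 1) y"
      using n by (simp add: indicator_def)
  qed
  finally show ?thesis .
qed


lemma sqrt_prod_gen: "sqrt (prod f A) = prod (\<lambda>i. sqrt (f i)) A"
  by (induction A rule: infinite_finite_induct) (auto simp: real_sqrt_mult)

lemma gauss_side:
  fixes L :: "real^'d^'d" and p :: "real^'d" and lam :: real
  assumes sym: "\<And>x y. (L *v x) \<bullet> y = x \<bullet> (L *v y)"
    and pd: "\<And>x. lam * (x \<bullet> x) \<le> x \<bullet> (L *v x)" and lam: "0 < lam"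
  shows "emeasure (gauss_prec L) UNIV = 1"
    and "\<And>x. \<bar>p \<bullet> x\<bar> \<le> wnorm (matrix_inv L) p * sqrt (x \<bullet> (L *v x))"
    and "(\<integral>\<^sup>+\<theta>. ennreal (\<bar>p \<bullet> \<theta>\<bar> / sqrt (\<theta> \<bullet> (L *v \<theta>))) \<partial>gauss_prec L)
          = ennreal (wnorm (matrix_inv L) p * Kball (axis undefined 1 :: real^'d))"
    and "0 \<le> wnorm (matrix_inv L) p"
proof -
  have linA: "linear ((*v) L)" by simp
  obtain e :: "'d \<Rightarrow> real^'d" where ee: "\<And>i j. e i \<bullet> e j = (if i = j then 1 else 0)"
    and eig0: "\<And>i. L *v e i = (e i \<bullet> (L *v e i)) *\<^sub>R e i"
    and exps: "\<And>x. x = (\<Sum>i\<in>UNIV. (x \<bullet> e i) *\<^sub>R e i)"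
    using spectral[OF linA, of thesis] sym by blast
  define l where "l i = e i \<bullet> (L *v e i)" for i
  have eig: "L *v e i = l i *\<^sub>R e i" for i using eig0 l_def by simp
  have lpos: "l i \<ge> lam" for i using pd[of "e i"] ee[of i i] by (simp add: l_def)
  then have lp: "l i > 0" for i using lam by (meson less_le_trans)
  have coord: "(\<Sum>i\<in>UNIV. c i *\<^sub>R e i) \<bullet> e j = c j" for c j
    by (simp add: inner_sum_left ee if_distrib cong: if_cong)
  have eqc: "x = y" if "\<And>j. x \<bullet> e j = y \<bullet> e j" for x y
    using exps[of x] exps[of y] that by simp
  have ip: "x \<bullet> y = (\<Sum>i\<in>UNIV. (x \<bullet> e i) * (y \<bullet> e i))" for x y
  proof -
    have "x \<bullet> y = (\<Sum>i\<in>UNIV. (x \<bullet> e i) *\<^sub>R e i) \<bullet> y" using exps[of x] by simp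
    also have "\<dots> = (\<Sum>i\<in>UNIV. (x \<bullet> e i) * (e i \<bullet> y))"
      unfolding inner_sum_left inner_scaleR_left ..
    also have "\<dots> = (\<Sum>i\<in>UNIV. (x \<bullet> e i) * (y \<bullet> e i))"
      by (metis (no_types) inner_commute)
    finally show ?thesis .
  qed
  have Le: "(L *v x) \<bullet> e j = l j * (x \<bullet> e j)" for x j
    by (simp add: sym eig)
  have quad: "x \<bullet> (L *v x) = (\<Sum>i\<in>UNIV. l i * (x \<bullet> e i)\<^sup>2)" for x
    by (simp add: ip[of x "L *v x"] Le power2_eq_square mult_ac)
  define Mf where "Mf x = (\<Sum>i\<in>UNIV. ((x \<bullet> e i) / l i) *\<^sub>R e i)" for x
  have linM: "linear Mf" unfolding linear_iff Mf_def
    by (simp add: inner_add_left add_divide_distrib scaleR_add_left sum.distrib scaleR_sum_right)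
  have LM: "L *v Mf x = x" for x
    by (rule eqc) (simp add: Le Mf_def coord lp less_imp_neq[symmetric])
  have MLi: "Mf (L *v x) = x" for x
    by (rule eqc) (simp add: Le Mf_def coord lp less_imp_neq[symmetric])
  define Minv where "Minv = matrix Mf"
  have Mv: "Minv *v x = Mf x" for x using linM by (metis Minv_def matrix_vector_mul(2))
  have inv1: "L ** Minv = mat 1" by (simp add: matrix_eq Mv LM flip: matrix_vector_mul_assoc)
  have inv2: "Minv ** L = mat 1" by (simp add: matrix_eq Mv MLi flip: matrix_vector_mul_assoc)
  have "L ** matrix_inv L = mat 1 \<and> matrix_inv L ** L = mat 1"
    unfolding matrix_inv_def by (rule someI[of _ Minv]) (simp add: inv1 inv2)
  then have invL: "matrix_inv L *v x = Mf x" for x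
    by (metis MLi matrix_vector_mul_assoc matrix_vector_mul_lid)
  define v where "v = (\<chi> i. (p \<bullet> e i) / sqrt (l i))"
  have wv: "wnorm (matrix_inv L) p = norm v"
  proof -
    have "p \<bullet> (matrix_inv L *v p) = p \<bullet> Mf p" by (simp add: invL)
    also have "\<dots> = (\<Sum>i\<in>UNIV. (p \<bullet> e i) * (Mf p \<bullet> e i))" by (rule ip)
    also have "\<dots> = (\<Sum>i\<in>UNIV. (p \<bullet> e i) * ((p \<bullet> e i) / l i))"
      unfolding Mf_def coord ..
    also have "\<dots> = v \<bullet> v"
      by (simp add: v_def inner_vec_def power2_eq_square lp less_imp_le real_sqrt_mult[symmetric])
    finally show ?thesis by (simp add: wnorm_def norm_eq_sqrt_inner)
  qed
  show "0 \<le> wnorm (matrix_inv L) p" using wv by simp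
  show "\<bar>p \<bullet> x\<bar> \<le> wnorm (matrix_inv L) p * sqrt (x \<bullet> (L *v x))" for x
  proof -
    define b where "b = (\<chi> i. sqrt (l i) * (x \<bullet> e i))"
    have vb: "v $ i * b $ i = (p \<bullet> e i) * (x \<bullet> e i)" for i
    proof -
      have "sqrt (l i) > 0" using lp[of i] by simp
      then show ?thesis by (simp add: v_def b_def)
    qed
    have "v \<bullet> b = (\<Sum>i\<in>UNIV. (p \<bullet> e i) * (x \<bullet> e i))"
      by (simp add: inner_vec_def vb)
    then have "p \<bullet> x = v \<bullet> b" using ip[of p x] by simp
    have bb: "b $ i * b $ i = l i * (x \<bullet> e i)\<^sup>2" for i
      using lp[of i] by (simp add: b_def power2_eq_square mult_ac)
    have "b \<bullet> b = (\<Sum>i\<in>UNIV. b $ i * b $ i)" by (simp add: inner_vec_def)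
    also have "\<dots> = (\<Sum>i\<in>UNIV. l i * (x \<bullet> e i)\<^sup>2)" using bb by simp
    also have "\<dots> = x \<bullet> (L *v x)" using quad[of x] by simp
    finally have "norm b = sqrt (x \<bullet> (L *v x))" by (simp add: norm_eq_sqrt_inner)
    moreover note \<open>p \<bullet> x = v \<bullet> b\<close>
    ultimately show ?thesis using wv Cauchy_Schwarz_ineq2[of v b] by simp
  qed
  define Q :: "real^'d^'d" where "Q = (\<chi> r c. e c $ r)"
  define D :: "real^'d^'d" where "D = (\<chi> r c. if r = c then l r else 0)"
  have LQ: "L ** Q = Q ** D"
  proof -
    have "(L ** Q) $ r $ c = (L *v e c) $ r" for r c
      by (simp add: matrix_matrix_mult_def matrix_vector_mult_def Q_def)
    moreover have "(Q ** D) $ r $ c = l c * e c $ r" for r c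
      by (simp add: matrix_matrix_mult_def Q_def D_def if_distrib cong: if_cong)
    ultimately show ?thesis by (simp add: vec_eq_iff eig)
  qed
  have QQ: "transpose Q ** Q = mat 1"
  proof -
    have "(transpose Q ** Q) $ i $ j = e i \<bullet> e j" for i j
      by (simp add: matrix_matrix_mult_def transpose_def Q_def inner_vec_def)
    then show ?thesis by (simp add: vec_eq_iff ee mat_def)
  qed
  have "det Q * det Q = 1"
    using arg_cong[OF QQ, of det] by (simp add: det_mul det_transpose)
  then have dQ: "det Q \<noteq> 0" by auto
  have detD: "det D = (\<Prod>i\<in>UNIV. l i)" by (subst det_diagonal) (auto simp: D_def)
  have "det L * det Q = det Q * det D" using arg_cong[OF LQ, of det] by (simp add: det_mul)
  then have detL: "det L = (\<Prod>i\<in>UNIV. l i)" using dQ detD by simp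
  define f where "f y = (\<Sum>i\<in>UNIV. (y $ i) *\<^sub>R e i)" for y :: "real^'d"
  have fe: "f y \<bullet> e j = y $ j" for y j unfolding f_def by (rule coord)
  have linf: "linear f" unfolding linear_iff f_def
    by (simp add: scaleR_add_left sum.distrib scaleR_sum_right)
  have orthf: "orthogonal_transformation f"
  proof -
    have "norm (f y) = norm y" for y
    proof -
      have "f y \<bullet> f y = (\<Sum>i\<in>UNIV. (y $ i) * (y $ i))" by (simp add: ip[of "f y" "f y"] fe)
      also have "\<dots> = y \<bullet> y" by (simp add: inner_vec_def)
      finally show ?thesis by (simp add: norm_eq_sqrt_inner)
    qed
    then show ?thesis using linf by (simp add: orthogonal_transformation)
  qed
  have [measurable]: "f \<in> borel_measurable borel"
    by (intro borel_measurable_continuous_onI linear_continuous_on linear_conv_bounded_linear[THEN iffD1] linf)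
  have Lm[measurable]: "(\<lambda>x. L *v x) \<in> borel_measurable borel"
    by (intro borel_measurable_continuous_onI linear_continuous_on linear_conv_bounded_linear[THEN iffD1]) simp
  define lv where "lv = (\<chi> i. l i)"
  define c where "c b = 1 / sqrt (lv \<bullet> b)" for b :: "real^'d"
  define Sf where "Sf z = (\<chi> i. z $ i / sqrt (l i))" for z :: "real^'d"
  define T where "T z = f (Sf z)" for z
  have cax: "c (axis i 1) = 1 / sqrt (l i)" for i by (simp add: c_def lv_def inner_axis)
  have cnz: "c b \<noteq> 0" if "b \<in> Basis" for b
    using that lp by (auto simp: Basis_vec_def cax) (metis less_irrefl)
  have Sf_eq: "0 + (\<Sum>j\<in>Basis. (c j * (z \<bullet> j)) *\<^sub>R j) = Sf z" for z
  proof -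
    have "(\<Sum>j\<in>Basis. (c j * (z \<bullet> j)) *\<^sub>R j) = (\<Sum>i\<in>UNIV. (z $ i / sqrt (l i)) *\<^sub>R axis i (1::real))"
      by (simp add: sum_Basis_cart cax inner_axis)
    also have "\<dots> = Sf z"
      unfolding Sf_def vec_eq_iff by (simp add: axis_def if_distrib[of "\<lambda>x. _ * x / _"] cong: if_cong)
    finally show ?thesis by simp
  qed
  have prodc: "(\<Prod>j\<in>(Basis::(real^'d) set). \<bar>c j\<bar>) = (\<Prod>i\<in>UNIV. 1 / sqrt (l i))"
    using lp by (simp add: prod_Basis_cart cax less_imp_le)
  have TLT: "T z \<bullet> (L *v T z) = (norm z)\<^sup>2" for z
  proof -
    have "T z \<bullet> (L *v T z) = (\<Sum>i\<in>UNIV. l i * (z $ i / sqrt (l i))\<^sup>2)"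
      by (simp add: quad T_def fe Sf_def)
    also have "\<dots> = (\<Sum>i\<in>UNIV. z $ i * z $ i)"
      using lp by (intro sum.cong refl) (simp add: power_divide less_imp_le power2_eq_square less_imp_neq[symmetric])
    also have "\<dots> = (norm z)\<^sup>2" by (simp add: power2_norm_eq_inner inner_vec_def)
    finally show ?thesis .
  qed
  have linT: "linear T" unfolding T_def[abs_def]
    by (rule linear_compose[unfolded o_def, OF _ linf]) (auto simp: linear_iff Sf_def vec_eq_iff add_divide_distrib)
  have Tm[measurable]: "T \<in> borel_measurable borel"
    by (intro borel_measurable_continuous_onI linear_continuous_on linear_conv_bounded_linear[THEN iffD1] linT)
  define c0 where "c0 = 1 / (2 * pi) powr (real CARD('d) / 2)"
  have Cc: "sqrt (det L) / (2 * pi) powr (real CARD('d) / 2) * (\<Prod>i\<in>UNIV. 1 / sqrt (l i)) = c0"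
  proof -
    have "sqrt (det L) * (\<Prod>i\<in>UNIV. 1 / sqrt (l i)) = 1"
      using lp by (simp add: detL sqrt_prod_gen prod_dividef less_imp_le less_imp_neq[symmetric])
    then show ?thesis by (simp add: c0_def)
  qed
  have cov: "(\<integral>\<^sup>+\<theta>. h \<theta> \<partial>gauss_prec L) = ennreal c0 * (\<integral>\<^sup>+ z. h (T z) * ennreal (exp (- (norm z)\<^sup>2 / 2)) \<partial>lborel)"
    if hm[measurable]: "h \<in> borel_measurable borel" for h
  proof -
    define F where "F \<theta> = ennreal (sqrt (det L) / (2 * pi) powr (real CARD('d) / 2) * exp (- (\<theta> \<bullet> (L *v \<theta>)) / 2)) * h \<theta>" for \<theta>
    have Fm[measurable]: "F \<in> borel_measurable borel" unfolding F_def by measurable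
    have "(\<integral>\<^sup>+\<theta>. h \<theta> \<partial>gauss_prec L) = (\<integral>\<^sup>+\<theta>. F \<theta> \<partial>lborel)"
      unfolding gauss_prec_def F_def by (subst nn_integral_density) auto
    also have "\<dots> = (\<integral>\<^sup>+\<theta>. F \<theta> \<partial>distr lborel borel f)" using orth_lborel[OF orthf] by simp
    also have "\<dots> = (\<integral>\<^sup>+y. F (f y) \<partial>lborel)" by (subst nn_integral_distr) auto
    also have "\<dots> = (\<integral>\<^sup>+y. F (f y) \<partial>density (distr lborel borel (\<lambda>x. 0 + (\<Sum>j\<in>Basis. (c j * (x \<bullet> j)) *\<^sub>R j))) (\<lambda>_. (\<Prod>j\<in>Basis. \<bar>c j\<bar>)))"
      using arg_cong[OF lborel_affine_euclidean[where c=c and t="0::real^'d", OF cnz], of "\<lambda>M. \<integral>\<^sup>+y. F (f y) \<partial>M"]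
      by simp
    also have "\<dots> = (\<integral>\<^sup>+z. ennreal (\<Prod>j\<in>(Basis::(real^'d) set). \<bar>c j\<bar>) * F (f (0 + (\<Sum>j\<in>Basis. (c j * (z \<bullet> j)) *\<^sub>R j))) \<partial>lborel)"
      by (subst nn_integral_density) (auto simp: nn_integral_distr)
    also have "\<dots> = (\<integral>\<^sup>+z. ennreal c0 * (h (T z) * ennreal (exp (- (norm z)\<^sup>2 / 2))) \<partial>lborel)"
    proof (intro nn_integral_cong)
      fix z :: "real^'d"
      have "ennreal (\<Prod>j\<in>(Basis::(real^'d) set). \<bar>c j\<bar>) * F (f (0 + (\<Sum>j\<in>Basis. (c j * (z \<bullet> j)) *\<^sub>R j)))
          = ennreal (\<Prod>i\<in>UNIV. 1 / sqrt (l i)) * (ennreal (sqrt (det L) / (2 * pi) powr (real CARD('d) / 2) * exp (- (norm z)\<^sup>2 / 2)) * h (T z))"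
        by (simp only: Sf_eq prodc F_def T_def[symmetric] TLT)
      also have "\<dots> = ennreal c0 * (h (T z) * ennreal (exp (- (norm z)\<^sup>2 / 2)))"
        using lp detL Cc[symmetric]
        by (simp add: ennreal_mult'[symmetric] mult_ac prod_nonneg less_imp_le)
      finally show "ennreal (\<Prod>j\<in>(Basis::(real^'d) set). \<bar>c j\<bar>) * F (f (0 + (\<Sum>j\<in>Basis. (c j * (z \<bullet> j)) *\<^sub>R j)))
          = ennreal c0 * (h (T z) * ennreal (exp (- (norm z)\<^sup>2 / 2)))" .
    qed
    also have "\<dots> = ennreal c0 * (\<integral>\<^sup>+ z. h (T z) * ennreal (exp (- (norm z)\<^sup>2 / 2)) \<partial>lborel)"
      by (rule nn_integral_cmult) measurable
    finally show ?thesis .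
  qed
  define Phi where "Phi = (\<integral>\<^sup>+ s. indicator {0<..<1} s * ennreal (sqrt (- 2 * ln s) ^ CARD('d)) \<partial>lborel)"
  define volr where "volr = measure lborel (ball (0::real^'d) 1)"
  have volr: "emeasure lborel (ball (0::real^'d) 1) = ennreal volr" "volr > 0"
    using vol_ball[where 'd='d] by (auto simp: volr_def)
  have [measurable]: "ball (0::real^'d) 1 \<in> sets borel" by simp
  have E1: "(\<integral>\<^sup>+ z. ennreal (exp (- (norm (z::real^'d))\<^sup>2 / 2)) \<partial>lborel) = Phi * ennreal volr"
  proof -
    have "(\<integral>\<^sup>+ z. ennreal (exp (- (norm (z::real^'d))\<^sup>2 / 2)) \<partial>lborel)
        = (\<integral>\<^sup>+ z. (\<lambda>_. 1) z * ennreal (exp (- (norm (z::real^'d))\<^sup>2 / 2)) \<partial>lborel)" by simp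
    also have "\<dots> = Phi * (\<integral>\<^sup>+ z. (\<lambda>_. 1) z * indicator (ball (0::real^'d) 1) z \<partial>lborel)"
      unfolding Phi_def by (rule layer) auto
    also have "(\<integral>\<^sup>+ z. (\<lambda>_. 1) z * indicator (ball (0::real^'d) 1) z \<partial>lborel) = ennreal volr"
      using volr by simp
    finally show ?thesis .
  qed
  define tp where "tp = (2 * pi) powr (real CARD('d) / 2)"
  have tp: "tp > 0" "c0 * tp = 1" by (auto simp: tp_def c0_def)
  have Phi_vol: "Phi * ennreal volr = ennreal tp" using E1 gaussd[where 'd='d] by (simp add: tp_def)
  have "Phi \<noteq> \<infinity>"
  proof
    assume "Phi = \<infinity>"
    then have "Phi * ennreal volr = \<infinity>" using volr(2) by (simp add: ennreal_mult_eq_top_iff)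
    then show False using Phi_vol by simp
  qed
  then obtain Phir where Phir: "Phi = ennreal Phir" "Phir \<ge> 0" by (cases Phi) auto
  have Phir_vol: "Phir * volr = tp"
    using Phi_vol Phir volr(2) tp(1) by (simp add: ennreal_mult'[symmetric])
  show "emeasure (gauss_prec L) UNIV = 1"
  proof -
    have sp: "space (gauss_prec L) = UNIV" by (simp add: gauss_prec_def)
    have "emeasure (gauss_prec L) UNIV = (\<integral>\<^sup>+\<theta>. 1 \<partial>gauss_prec L)"
      by (simp add: sp)
    also have "\<dots> = ennreal c0 * (\<integral>\<^sup>+ z. 1 * ennreal (exp (- (norm (z::real^'d))\<^sup>2 / 2)) \<partial>lborel)"
      using cov[of "\<lambda>_. 1"] by simp
    also have "\<dots> = ennreal c0 * ennreal tp" using gaussd[where 'd='d] by (simp add: tp_def)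
    also have "\<dots> = 1" using tp by (simp add: ennreal_mult'[symmetric] c0_def)
    finally show ?thesis .
  qed
  show "(\<integral>\<^sup>+\<theta>. ennreal (\<bar>p \<bullet> \<theta>\<bar> / sqrt (\<theta> \<bullet> (L *v \<theta>))) \<partial>gauss_prec L)
          = ennreal (wnorm (matrix_inv L) p * Kball (axis undefined 1 :: real^'d))"
  proof -
    define a0 :: "real^'d" where "a0 = axis undefined 1"
    have na0: "norm a0 = 1" by (simp add: a0_def)
    define g where "g z = ennreal \<bar>sgn v \<bullet> sgn z\<bar>" for z :: "real^'d"
    have gm[measurable]: "g \<in> borel_measurable borel" unfolding g_def by measurable
    have ghom: "g (r *\<^sub>R z) = g z" if "r > 0" for r z
      using that by (simp add: g_def sgn_scaleR)
    have pT: "p \<bullet> T z = v \<bullet> z" for z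
    proof -
      have "p \<bullet> T z = (\<Sum>i\<in>UNIV. (p \<bullet> e i) * (T z \<bullet> e i))" by (rule ip)
      also have "\<dots> = (\<Sum>i\<in>UNIV. v $ i * z $ i)"
        by (simp add: T_def fe Sf_def v_def)
      also have "\<dots> = v \<bullet> z" by (simp add: inner_vec_def)
      finally show ?thesis .
    qed
    have hT: "ennreal (\<bar>p \<bullet> T z\<bar> / sqrt (T z \<bullet> (L *v T z))) = ennreal (norm v) * g z" for z
    proof (cases "z = 0 \<or> v = 0")
      case True
      then show ?thesis by (auto simp: pT g_def TLT)
    next
      case False
      have "\<bar>p \<bullet> T z\<bar> / sqrt (T z \<bullet> (L *v T z)) = \<bar>v \<bullet> z\<bar> / norm z" by (simp add: pT TLT)
      also have "\<dots> = norm v * \<bar>sgn v \<bullet> sgn z\<bar>"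
        using False by (simp add: sgn_div_norm abs_mult field_simps)
      finally show ?thesis by (simp add: g_def ennreal_mult)
    qed
    have "(\<integral>\<^sup>+\<theta>. ennreal (\<bar>p \<bullet> \<theta>\<bar> / sqrt (\<theta> \<bullet> (L *v \<theta>))) \<partial>gauss_prec L)
        = ennreal c0 * (\<integral>\<^sup>+ z. ennreal (\<bar>p \<bullet> T z\<bar> / sqrt (T z \<bullet> (L *v T z))) * ennreal (exp (- (norm z)\<^sup>2 / 2)) \<partial>lborel)"
      by (rule cov) measurable
    also have "\<dots> = ennreal c0 * (\<integral>\<^sup>+ z. ennreal (norm v) * (g z * ennreal (exp (- (norm z)\<^sup>2 / 2))) \<partial>lborel)"
      by (simp add: hT mult.assoc)
    also have "\<dots> = ennreal c0 * (ennreal (norm v) * (\<integral>\<^sup>+ z. g z * ennreal (exp (- (norm z)\<^sup>2 / 2)) \<partial>lborel))"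
      by (subst nn_integral_cmult) auto
    also have "(\<integral>\<^sup>+ z. g z * ennreal (exp (- (norm z)\<^sup>2 / 2)) \<partial>lborel) = Phi * Jz (sgn v)"
      unfolding Phi_def Jz_def g_def[symmetric] by (rule layer[OF gm ghom])
    also have "ennreal (norm v) * (Phi * Jz (sgn v)) = ennreal (norm v) * (Phi * Jz a0)"
    proof (cases "v = 0")
      case False
      then have "Jz (sgn v) = Jz a0" using na0 by (intro Jz_rot) (auto simp: norm_sgn)
      then show ?thesis by simp
    qed simp
    also have "Jz a0 = ennreal (enn2real (Jz a0))" by (rule Jz_real)
    also have "ennreal c0 * (ennreal (norm v) * (Phi * ennreal (enn2real (Jz a0))))
        = ennreal (c0 * (norm v * (Phir * enn2real (Jz a0))))"
      using Phir tp by (simp add: ennreal_mult'[symmetric] c0_def)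
    also have "c0 * (norm v * (Phir * enn2real (Jz a0))) = norm v * (enn2real (Jz a0) / volr)"
    proof -
      have "Phir * (c0 * volr) = c0 * (Phir * volr)" by (simp add: mult_ac)
      then have "Phir * (c0 * volr) = 1" using Phir_vol tp by simp
      then have cp: "c0 * Phir = 1 / volr" using volr(2) by (simp add: field_simps)
      have "c0 * (norm v * (Phir * enn2real (Jz a0))) = (c0 * Phir) * (norm v * enn2real (Jz a0))"
        by (simp add: mult_ac)
      then show ?thesis using cp by simp
    qed
    finally show ?thesis by (simp add: wv Kball_def volr_def a0_def)
  qed
qed


lemma mudot_eq: "mudot x = exp (- x) / (1 + exp (- x))\<^sup>2"
proof -
  have pos: "1 + exp (- x) \<noteq> 0" by (smt (verit) exp_gt_zero)
  have "(mu has_real_derivative exp (- x) / (1 + exp (- x))\<^sup>2) (at x)"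
    unfolding mu_def[abs_def]
    by (rule derivative_eq_intros refl | use pos in \<open>simp add: power2_eq_square\<close>)+
  then show ?thesis unfolding mudot_def by (rule DERIV_imp_deriv)
qed

lemma mudot_nonneg: "0 \<le> mudot x"
  by (simp add: mudot_eq)

lemma mv_sum: "(\<Sum>i\<in>A. B i) *v (x::real^'n) = (\<Sum>i\<in>A. B i *v x)"
  by (induction A rule: infinite_finite_induct) (auto simp: matrix_vector_mult_add_rdistrib)

lemma outer_mv: "outer f *v x = (f \<bullet> x) *\<^sub>R (f::real^'n)"
  by (simp add: vec_eq_iff matrix_vector_mult_def outer_def inner_vec_def sum_distrib_left mult_ac)

lemma Lmat_mv: "Lmat lam fs thp t *v x
   = lam *\<^sub>R x + (\<Sum>i\<in>{1..<t}. (mudot (fs i \<bullet> thp i) * (fs i \<bullet> x)) *\<^sub>R fs i)"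
  unfolding Lmat_def
  by (simp add: matrix_vector_mult_add_rdistrib mv_sum outer_mv
      flip: scaleR_matrix_vector_assoc)

lemma Lmat_sym: "(Lmat lam fs thp t *v x) \<bullet> y = x \<bullet> (Lmat lam fs thp t *v y)"
  by (simp add: Lmat_mv inner_add_left inner_add_right inner_sum_left inner_sum_right inner_commute mult_ac)

lemma Lmat_pd: "lam * (x \<bullet> x) \<le> x \<bullet> (Lmat lam fs thp t *v x)"
proof -
  have "x \<bullet> (Lmat lam fs thp t *v x) = lam * (x \<bullet> x) + (\<Sum>i\<in>{1..<t}. mudot (fs i \<bullet> thp i) * (fs i \<bullet> x)\<^sup>2)"
    by (simp add: Lmat_mv inner_add_right inner_sum_right power2_eq_square inner_commute mult_ac)
  moreover have "0 \<le> (\<Sum>i\<in>{1..<t}. mudot (fs i \<bullet> thp i) * (fs i \<bullet> x)\<^sup>2)"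
    by (intro sum_nonneg mult_nonneg_nonneg mudot_nonneg) simp
  ultimately show ?thesis by simp
qed

theorem mainTheorem8:
  fixes \<delta> lam S :: real and t :: nat
    and beta :: "nat \<Rightarrow> real \<Rightarrow> real"
    and Act :: "'s \<Rightarrow> 'a set"
    and phi :: "'s \<Rightarrow> 'a \<Rightarrow> real^'d"
    and hs :: "nat \<Rightarrow> 's" and ha :: "nat \<Rightarrow> 'a" and hx :: "nat \<Rightarrow> real"
    and thbar thp :: "nat \<Rightarrow> real^'d"
    and s :: 's and sel :: "real^'d \<Rightarrow> 'a" and amu :: 'a
  defines "fs \<equiv> (\<lambda>i. phi (hs i) (ha i))"
  defines "Lt \<equiv> Lmat lam fs thp t"
  assumes "0 \<le> \<delta>" and "\<delta> < 1" and "1 \<le> t"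
    and "0 < lam" and "0 < S"
    and "\<forall>s'. finite (Act s') \<and> Act s' \<noteq> {}"
    and "\<forall>s' a. norm (phi s' a) \<le> 1"
    and "\<forall>i d. 0 < beta i d"
    and "\<forall>i\<in>{1..<t}. ha i \<in> Act (hs i) \<and> hx i \<in> {0, 1}"
    and "\<forall>i\<in>{1..t}. thbar i \<in> cball 0 S
           \<and> (\<forall>\<theta>\<in>cball 0 S. loss lam fs hx i (thbar i) \<le> loss lam fs hx i \<theta>)"
    and "\<forall>i\<in>{1..<t}. thp i \<in> Econf lam S fs hx (beta i \<delta>) i (thbar i)
           \<and> (\<forall>\<theta>\<in>Econf lam S fs hx (beta i \<delta>) i (thbar i).
                 mudot (fs i \<bullet> thp i) \<le> mudot (fs i \<bullet> \<theta>))"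
    and "sel \<in> measurable borel (count_space UNIV)"
    and "\<forall>\<theta>. sel \<theta> \<in> Act s \<and>
           (\<forall>a\<in>Act s. mudot (phi s a \<bullet> thbar t) * \<bar>phi s a \<bullet> \<theta>\<bar>
                       \<le> mudot (phi s (sel \<theta>) \<bullet> thbar t) * \<bar>phi s (sel \<theta>) \<bullet> \<theta>\<bar>)"
    and "amu \<in> Act s"
    and "\<forall>a\<in>Act s.
           (SUP \<theta>\<in>Vset lam S fs hx beta \<delta> thbar t. mudot (phi s a \<bullet> \<theta>) * wnorm (matrix_inv Lt) (phi s a))
         \<le> (SUP \<theta>\<in>Vset lam S fs hx beta \<delta> thbar t. mudot (phi s amu \<bullet> \<theta>) * wnorm (matrix_inv Lt) (phi s amu))"
  shows "(INF \<theta>\<in>Econf lam S fs hx (beta t \<delta>) t (thbar t). U phi s amu \<theta> Lt) * Iint phi s amu Lt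
           \<le> (\<integral>\<theta>. U phi s (sel \<theta>) (thbar t) Lt \<partial>gauss_prec Lt)"
proof -
  note A = assms
  let ?G = "gauss_prec Lt"
  let ?c = "mudot (phi s amu \<bullet> thbar t)"
  let ?w = "\<lambda>a. wnorm (matrix_inv Lt) (phi s a)"
  define a0 :: "real^'d" where "a0 = axis undefined 1"
  define h where "h \<theta> = \<bar>phi s amu \<bullet> \<theta>\<bar> / sqrt (\<theta> \<bullet> (Lt *v \<theta>))" for \<theta>
  have sym: "\<And>x y. (Lt *v x) \<bullet> y = x \<bullet> (Lt *v y)" unfolding Lt_def by (rule Lmat_sym)
  have pd: "\<And>x. lam * (x \<bullet> x) \<le> x \<bullet> (Lt *v x)" unfolding Lt_def by (rule Lmat_pd)
  note GS = gauss_side[OF sym pd \<open>0 < lam\<close>]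
  have wnn: "0 \<le> ?w a" for a by (rule GS(4))
  have Unn: "0 \<le> U phi s a th Lt" for a th by (simp add: U_def wnn mudot_nonneg)
  have spG: "space ?G = UNIV" by (simp add: gauss_prec_def)
  have "prob_space ?G" using GS(1) spG by (intro prob_spaceI) simp
  then interpret G: prob_space ?G .
  have Lm[measurable]: "(\<lambda>x. Lt *v x) \<in> borel_measurable borel"
    by (intro borel_measurable_continuous_onI linear_continuous_on linear_conv_bounded_linear[THEN iffD1]) simp
  have hm[measurable]: "h \<in> borel_measurable borel" unfolding h_def by measurable
  have hmG: "h \<in> borel_measurable ?G" by (simp add: gauss_prec_def)
  have qnn: "0 \<le> \<theta> \<bullet> (Lt *v \<theta>)" for \<theta>
    using pd[of \<theta>] \<open>0 < lam\<close> by (smt (verit) inner_ge_zero mult_nonneg_nonneg)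
  have hnn: "0 \<le> h \<theta>" for \<theta> using qnn[of \<theta>] by (simp add: h_def)
  have hb: "h \<theta> \<le> ?w amu" for \<theta>
  proof (cases "sqrt (\<theta> \<bullet> (Lt *v \<theta>)) = 0")
    case True then show ?thesis by (simp add: h_def wnn)
  next
    case False
    then have "sqrt (\<theta> \<bullet> (Lt *v \<theta>)) > 0" using qnn[of \<theta>] by (simp add: order_le_neq_trans)
    then show ?thesis using GS(2)[of "phi s amu" \<theta>] by (simp add: h_def divide_le_eq)
  qed
  have hint: "integrable ?G h"
    using hmG hnn hb by (intro G.integrable_const_bound[where B="?w amu"]) auto
  define F where "F \<theta> = U phi s (sel \<theta>) (thbar t) Lt" for \<theta>
  have FmG: "F \<in> borel_measurable ?G"
  proof -
    have "(\<lambda>a. U phi s a (thbar t) Lt) \<in> measurable (count_space UNIV) borel" by simp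
    moreover have "sel \<in> measurable ?G (count_space UNIV)"
      using A(14) by (simp add: gauss_prec_def)
    ultimately show ?thesis unfolding F_def by (rule measurable_compose[rotated])
  qed
  have finAct: "finite (Act s)" using A(8) by blast
  have Fb: "norm (F \<theta>) \<le> (\<Sum>a\<in>Act s. U phi s a (thbar t) Lt)" for \<theta>
  proof -
    have "sel \<theta> \<in> Act s" using A(15) by blast
    then have "F \<theta> \<le> (\<Sum>a\<in>Act s. U phi s a (thbar t) Lt)"
      unfolding F_def using finAct Unn by (intro member_le_sum) auto
    then show ?thesis using Unn by (simp add: F_def)
  qed
  have Fint: "integrable ?G F"
    using FmG Fb by (intro G.integrable_const_bound) auto
  have pw: "?c * h \<theta> \<le> F \<theta>" for \<theta>
  proof (cases "sqrt (\<theta> \<bullet> (Lt *v \<theta>)) = 0")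
    case True then show ?thesis using Unn by (simp add: h_def F_def)
  next
    case False
    then have sp: "sqrt (\<theta> \<bullet> (Lt *v \<theta>)) > 0" using qnn[of \<theta>] by (simp add: order_le_neq_trans)
    let ?a = "sel \<theta>"
    have sel1: "?c * \<bar>phi s amu \<bullet> \<theta>\<bar> \<le> mudot (phi s ?a \<bullet> thbar t) * \<bar>phi s ?a \<bullet> \<theta>\<bar>"
      using A(15) A(16) by blast
    have cs: "\<bar>phi s ?a \<bullet> \<theta>\<bar> \<le> ?w ?a * sqrt (\<theta> \<bullet> (Lt *v \<theta>))" by (rule GS(2))
    have "?c * h \<theta> = (?c * \<bar>phi s amu \<bullet> \<theta>\<bar>) / sqrt (\<theta> \<bullet> (Lt *v \<theta>))" by (simp add: h_def)
    also have "\<dots> \<le> (mudot (phi s ?a \<bullet> thbar t) * \<bar>phi s ?a \<bullet> \<theta>\<bar>) / sqrt (\<theta> \<bullet> (Lt *v \<theta>))"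
      using sel1 sp by (simp add: divide_right_mono)
    also have "\<dots> \<le> mudot (phi s ?a \<bullet> thbar t) * ?w ?a"
      using cs sp mudot_nonneg[of "phi s ?a \<bullet> thbar t"]
      by (simp add: divide_le_eq mult_left_mono mult.assoc)
    finally show ?thesis by (simp add: F_def U_def)
  qed
  have Kb_nn: "0 \<le> Kball (u::real^'d)" for u
    using vol_ball(2)[where 'd='d] by (simp add: Kball_def)
  have hI: "(\<integral>\<theta>. h \<theta> \<partial>?G) = ?w amu * Kball a0"
  proof -
    have "(\<integral>\<theta>. h \<theta> \<partial>?G) = enn2real (\<integral>\<^sup>+\<theta>. ennreal (h \<theta>) \<partial>?G)"
      using hmG hnn by (intro integral_eq_nn_integral) auto
    also have "(\<integral>\<^sup>+\<theta>. ennreal (h \<theta>) \<partial>?G) = ennreal (?w amu * Kball a0)"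
      unfolding h_def a0_def by (rule GS(3))
    finally show ?thesis using wnn Kb_nn by simp
  qed
  have RHS: "?c * (?w amu * Kball a0) \<le> (\<integral>\<theta>. F \<theta> \<partial>?G)"
  proof -
    have "?c * (?w amu * Kball a0) = (\<integral>\<theta>. ?c * h \<theta> \<partial>?G)" using hI by simp
    also have "\<dots> \<le> (\<integral>\<theta>. F \<theta> \<partial>?G)"
      using hint Fint pw by (intro integral_mono) auto
    finally show ?thesis .
  qed
  have Iint_le: "Iint phi s amu Lt \<le> Kball a0"
  proof -
    let ?m = "inv_sqrt Lt *v phi s amu"
    have "Iint phi s amu Lt = Kball (sgn ?m)" unfolding Iint_def by (rule sphere_int)
    also have "\<dots> \<le> Kball a0"
    proof (cases "?m = 0")
      case True
      have "Jz (0::real^'d) = 0" by (simp add: Jz_def)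
      then show ?thesis using True Kb_nn by (simp add: Kball_def)
    next
      case False
      then have "Jz (sgn ?m) = Jz a0" by (intro Jz_rot) (auto simp: norm_sgn a0_def)
      then show ?thesis by (simp add: Kball_def)
    qed
    finally show ?thesis .
  qed
  have Iint_nn: "0 \<le> Iint phi s amu Lt" unfolding Iint_def by (rule integral_nonneg_AE) simp
  let ?E = "Econf lam S fs hx (beta t \<delta>) t (thbar t)"
  have tin: "thbar t \<in> ?E"
    using A(12) \<open>1 \<le> t\<close> by (auto simp: Econf_def)
  have bdd: "bdd_below ((\<lambda>\<theta>. U phi s amu \<theta> Lt) ` ?E)"
    using Unn by (intro bdd_belowI[of _ 0]) auto
  have INF_le: "(INF \<theta>\<in>?E. U phi s amu \<theta> Lt) \<le> ?c * ?w amu"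
    using cINF_lower[OF bdd tin] by (simp add: U_def)
  have INF_nn: "0 \<le> (INF \<theta>\<in>?E. U phi s amu \<theta> Lt)"
    using tin Unn by (intro cINF_greatest) auto
  have "(INF \<theta>\<in>?E. U phi s amu \<theta> Lt) * Iint phi s amu Lt \<le> (?c * ?w amu) * Kball a0"
    using INF_le Iint_le INF_nn Iint_nn by (intro mult_mono) (auto simp: wnn mudot_nonneg)
  also have "\<dots> \<le> (\<integral>\<theta>. F \<theta> \<partial>?G)" using RHS by (simp add: mult.assoc)
  finally show ?thesis by (simp add: F_def)
qed


end
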